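(* Let $q$ be a prime power and let $C\subseteq\mathrm{GF}(q^m)^n$ be a (linear or nonlinear) code with $n\le m$, $|C|=q^{mk}$ for an integer $1\le k\le n$, and minimum rank distance $d_{\mathrm R}=n-k+1$. Let $k\le v\le n$, let $\mathbf B$ be a $v\times n$ matrix and $\bar{\mathbf B}$ an $(n-v)\times n$ matrix over $\mathrm{GF}(q)$ such that the matrix obtained by stacking $\mathbf B$ above $\bar{\mathbf B}$ is invertible, and let $\mathcal V,\bar{\mathcal V}$ be their $\mathrm{GF}(q^m)$-row spans. Then the restriction $C_{\mathcal V}=\{r_{\mathcal V}(\mathbf c):\mathbf c\in C\}\subseteq\mathrm{GF}(q^m)^v$ is a code of length $v$ and cardinality $q^{mk}$ with minimum rank distance $v-k+1$ (i.e., an MRD code).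
   Context: For a vector $\mathbf x$ over $\mathrm{GF}(q^m)$, $\mathrm{rk}(\mathbf x)$ is the dimension over $\mathrm{GF}(q)$ of the $\mathrm{GF}(q)$-span of its coordinates; the minimum rank distance of a code is the minimum of $\mathrm{rk}(\mathbf c-\mathbf d)$ over distinct codewords. Every $\mathbf x\in\mathrm{GF}(q^m)^n$ decomposes uniquely as $\mathbf x=\mathbf a\mathbf B+\mathbf b\bar{\mathbf B}$ with $\mathbf a\in\mathrm{GF}(q^m)^v$, $\mathbf b\in\mathrm{GF}(q^m)^{n-v}$; here $\mathbf a\mathbf B=\mathbf x_{\mathcal V}$ is the projection of $\mathbf x$ onto $\mathcal V$ along $\bar{\mathcal V}$, and $r_{\mathcal V}(\mathbf x)=\mathbf a$ (equivalently $\mathbf x_{\mathcal V}\mathbf B^{-R}$ for a right inverse $\mathbf B^{-R}$ of $\mathbf B$). *)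

theory Defs
  imports Main
begin

text \<open>The big field GF(q^m) is a finite field type 'k; the small field GF(q) is a
  subfield F of it. Vectors of length n are functions nat => 'k vanishing from index n on;
  matrices are functions nat => nat => 'k (only indices below the sizes matter).\<close>

definition is_subfield :: "'k::field set \<Rightarrow> bool" where
  "is_subfield F \<longleftrightarrow> 0 \<in> F \<and> 1 \<in> F \<and>
     (\<forall>x\<in>F. \<forall>y\<in>F. x + y \<in> F \<and> x * y \<in> F) \<and>
     (\<forall>x\<in>F. - x \<in> F \<and> inverse x \<in> F)"

definition vecs :: "nat \<Rightarrow> (nat \<Rightarrow> 'k::zero) set" where
  "vecs n = {x. \<forall>i\<ge>n. x i = 0}"

definition F_span :: "'k::field set \<Rightarrow> 'k set \<Rightarrow> 'k set" where
  "F_span F A = {(\<Sum>a\<in>T. c a * a) | T c. finite T \<and> T \<subseteq> A \<and> (\<forall>a\<in>T. c a \<in> F)}"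

definition F_indep :: "'k::field set \<Rightarrow> 'k set \<Rightarrow> bool" where
  "F_indep F S \<longleftrightarrow> finite S \<and>
     (\<forall>c. (\<forall>s\<in>S. c s \<in> F) \<and> (\<Sum>s\<in>S. c s * s) = 0 \<longrightarrow> (\<forall>s\<in>S. c s = 0))"

definition F_dim :: "'k::{field,finite} set \<Rightarrow> 'k set \<Rightarrow> nat" where
  "F_dim F V = Max {card S | S. S \<subseteq> V \<and> F_indep F S}"

definition rk :: "'k::{field,finite} set \<Rightarrow> nat \<Rightarrow> (nat \<Rightarrow> 'k) \<Rightarrow> nat" where
  "rk F n x = F_dim F (F_span F {x i | i. i < n})"

definition min_rank_dist :: "'k::{field,finite} set \<Rightarrow> nat \<Rightarrow> (nat \<Rightarrow> 'k) set \<Rightarrow> nat" where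
  "min_rank_dist F n C = Min {rk F n (\<lambda>i. c i - d i) | c d. c \<in> C \<and> d \<in> C \<and> c \<noteq> d}"

definition vecmat :: "nat \<Rightarrow> nat \<Rightarrow> (nat \<Rightarrow> 'k::comm_ring_1) \<Rightarrow> (nat \<Rightarrow> nat \<Rightarrow> 'k) \<Rightarrow> (nat \<Rightarrow> 'k)" where
  "vecmat r n a M = (\<lambda>j. if j < n then (\<Sum>i<r. a i * M i j) else 0)"

definition mat_over :: "'k set \<Rightarrow> nat \<Rightarrow> nat \<Rightarrow> (nat \<Rightarrow> nat \<Rightarrow> 'k) \<Rightarrow> bool" where
  "mat_over F r n M \<longleftrightarrow> (\<forall>i<r. \<forall>j<n. M i j \<in> F)"

definition stack :: "nat \<Rightarrow> (nat \<Rightarrow> nat \<Rightarrow> 'k) \<Rightarrow> (nat \<Rightarrow> nat \<Rightarrow> 'k) \<Rightarrow> (nat \<Rightarrow> nat \<Rightarrow> 'k)" where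
  "stack v B Bbar = (\<lambda>i j. if i < v then B i j else Bbar (i - v) j)"

definition mat_mult :: "nat \<Rightarrow> (nat \<Rightarrow> nat \<Rightarrow> 'k::comm_ring_1) \<Rightarrow> (nat \<Rightarrow> nat \<Rightarrow> 'k) \<Rightarrow> (nat \<Rightarrow> nat \<Rightarrow> 'k)" where
  "mat_mult n M N = (\<lambda>i j. \<Sum>l<n. M i l * N l j)"

definition invertible_over :: "'k::comm_ring_1 set \<Rightarrow> nat \<Rightarrow> (nat \<Rightarrow> nat \<Rightarrow> 'k) \<Rightarrow> bool" where
  "invertible_over F n M \<longleftrightarrow> (\<exists>N. mat_over F n n N \<and>
     (\<forall>i<n. \<forall>j<n. mat_mult n M N i j = (if i = j then 1 else 0)) \<and>
     (\<forall>i<n. \<forall>j<n. mat_mult n N M i j = (if i = j then 1 else 0)))"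

definition r_V :: "nat \<Rightarrow> nat \<Rightarrow> (nat \<Rightarrow> nat \<Rightarrow> 'k::comm_ring_1) \<Rightarrow> (nat \<Rightarrow> nat \<Rightarrow> 'k)
                   \<Rightarrow> (nat \<Rightarrow> 'k) \<Rightarrow> (nat \<Rightarrow> 'k)" where
  "r_V v n B Bbar x = (THE a. a \<in> vecs v \<and>
      (\<exists>b\<in>vecs (n - v). (\<forall>j. x j = vecmat v n a B j + vecmat (n - v) n b Bbar j)))"

end

theory Submission
  imports Defs "HOL-Library.FuncSet"
begin

definition subsp :: "'k::field set \<Rightarrow> 'k set \<Rightarrow> bool" where
  "subsp F W \<longleftrightarrow> 0 \<in> W \<and> (\<forall>x\<in>W. \<forall>y\<in>W. x + y \<in> W) \<and> (\<forall>a\<in>F. \<forall>x\<in>W. a * x \<in> W)"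

definition comb :: "'k::field set \<Rightarrow> 'i set \<Rightarrow> ('i \<Rightarrow> 'k) \<Rightarrow> 'k set" where
  "comb F J g = {(\<Sum>i\<in>J. c i * g i) | c. \<forall>i\<in>J. c i \<in> F}"

lemma subfield_sum:
  assumes "is_subfield F" "\<And>i. i \<in> I \<Longrightarrow> f i \<in> F"
  shows "sum f I \<in> F"
  using assms(2)
proof (induction I rule: infinite_finite_induct)
  case (infinite A) then show ?case using assms(1) by (simp add: is_subfield_def)
next
  case empty then show ?case using assms(1) by (simp add: is_subfield_def)
next
  case (insert x A) then show ?case using assms(1) by (simp add: is_subfield_def)
qed

lemma subfield_ops:
  assumes "is_subfield F" "x \<in> F" "y \<in> F"
  shows "x + y \<in> F" "x * y \<in> F" "- x \<in> F" "x - y \<in> F" "inverse x \<in> F" "x / y \<in> F"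
proof -
  have A: "\<forall>x\<in>F. \<forall>y\<in>F. x + y \<in> F \<and> x * y \<in> F" and B: "\<forall>x\<in>F. - x \<in> F \<and> inverse x \<in> F"
    using assms(1) unfolding is_subfield_def by blast+
  show 1: "x + y \<in> F" "x * y \<in> F" using A assms(2,3) by blast+
  show 2: "- x \<in> F" "inverse x \<in> F" using B assms(2) by blast+
  have "- y \<in> F" "inverse y \<in> F" using B assms(3) by blast+
  then have "x + - y \<in> F" "x * inverse y \<in> F" using A assms(2) by blast+
  then show "x - y \<in> F" "x / y \<in> F" by (simp_all add: divide_inverse)
qed

lemma sf_neg: "is_subfield F \<Longrightarrow> x \<in> F \<Longrightarrow> - x \<in> F"
  using subfield_ops(3) by blast
lemma sf_inv: "is_subfield F \<Longrightarrow> x \<in> F \<Longrightarrow> inverse x \<in> F"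
  using subfield_ops(5) by blast

lemma indepD: "F_indep F S \<Longrightarrow> \<forall>s\<in>S. c s \<in> F \<Longrightarrow> (\<Sum>s\<in>S. c s * s) = 0 \<Longrightarrow> s \<in> S \<Longrightarrow> c s = 0"
  unfolding F_indep_def by blast

lemma subfield_01:
  assumes "is_subfield F"
  shows "0 \<in> F" "1 \<in> F"
  using assms by (simp_all add: is_subfield_def)

lemma subsp_sum:
  assumes "subsp F W" "\<And>i. i \<in> I \<Longrightarrow> f i \<in> W"
  shows "sum f I \<in> W"
  using assms(2)
proof (induction I rule: infinite_finite_induct)
  case (infinite A) then show ?case using assms(1) by (simp add: subsp_def)
next
  case empty then show ?case using assms(1) by (simp add: subsp_def)
next
  case (insert x A) then show ?case using assms(1) by (simp add: subsp_def)
qed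

lemma span_least:
  assumes "subsp F W" "X \<subseteq> W"
  shows "F_span F X \<subseteq> W"
proof
  fix x assume "x \<in> F_span F X"
  then obtain T c where x: "x = (\<Sum>a\<in>T. c a * a)" "T \<subseteq> X" "\<forall>a\<in>T. c a \<in> F"
    unfolding F_span_def by auto
  show "x \<in> W" unfolding x(1)
  proof (rule subsp_sum[OF assms(1)])
    fix a assume "a \<in> T"
    then have "c a \<in> F" "a \<in> W" using x assms(2) by auto
    then show "c a * a \<in> W" using assms(1) unfolding subsp_def by blast
  qed
qed

lemma comb_subsp:
  assumes "is_subfield F"
  shows "subsp F (comb F J g)"
  unfolding subsp_def
proof (intro conjI ballI)
  show "0 \<in> comb F J g" unfolding comb_def
    by (rule CollectI, rule exI[of _ "\<lambda>_. 0"]) (use assms in \<open>auto simp: is_subfield_def\<close>)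
next
  fix x y assume "x \<in> comb F J g" "y \<in> comb F J g"
  then obtain c d where "x = (\<Sum>i\<in>J. c i * g i)" "\<forall>i\<in>J. c i \<in> F"
     "y = (\<Sum>i\<in>J. d i * g i)" "\<forall>i\<in>J. d i \<in> F" unfolding comb_def by blast
  then show "x + y \<in> comb F J g" unfolding comb_def
    by (intro CollectI exI[of _ "\<lambda>i. c i + d i"])
       (auto simp: sum.distrib distrib_right subfield_ops[OF assms])
next
  fix a x assume "a \<in> F" "x \<in> comb F J g"
  then obtain c where "x = (\<Sum>i\<in>J. c i * g i)" "\<forall>i\<in>J. c i \<in> F"
    unfolding comb_def by blast
  then show "a * x \<in> comb F J g" unfolding comb_def
    using \<open>a \<in> F\<close>
    by (intro CollectI exI[of _ "\<lambda>i. a * c i"])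
       (auto simp: sum_distrib_left mult.assoc subfield_ops[OF assms])
qed

lemma span_eq_comb:
  fixes X :: "'k::{field,finite} set"
  assumes "is_subfield F"
  shows "F_span F X = comb F X (\<lambda>a. a)"
proof
  show "comb F X (\<lambda>a. a) \<subseteq> F_span F X"
    unfolding comb_def F_span_def using finite[of X] by blast
next
  show "F_span F X \<subseteq> comb F X (\<lambda>a. a)"
  proof
    fix x assume "x \<in> F_span F X"
    then obtain T c where x: "x = (\<Sum>a\<in>T. c a * a)" "T \<subseteq> X" "\<forall>a\<in>T. c a \<in> F"
      unfolding F_span_def by auto
    have "x = (\<Sum>a\<in>X. (if a \<in> T then c a else 0) * a)"
      unfolding x(1) by (rule sum.mono_neutral_cong_left) (use x(2) in auto)
    moreover have "\<forall>a\<in>X. (if a \<in> T then c a else 0) \<in> F"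
      using x subfield_01[OF assms] by auto
    ultimately show "x \<in> comb F X (\<lambda>a. a)"
      unfolding comb_def by (intro CollectI exI[of _ "\<lambda>a. if a \<in> T then c a else 0"]) simp
  qed
qed


lemma span_subsp:
  fixes X :: "'k::{field,finite} set"
  assumes "is_subfield F"
  shows "subsp F (F_span F X)"
  using comb_subsp[OF assms] span_eq_comb[OF assms] by metis

lemma span_inc:
  fixes X :: "'k::{field,finite} set"
  assumes "is_subfield F"
  shows "X \<subseteq> F_span F X"
proof
  fix x assume "x \<in> X"
  then show "x \<in> F_span F X" unfolding F_span_def
    by (intro CollectI exI[of _ "{x}"] exI[of _ "\<lambda>_. 1"]) (simp add: subfield_01[OF assms])
qed

lemma span_image_eq:
  fixes g :: "'i \<Rightarrow> 'k::{field,finite}"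
  assumes "is_subfield F" "finite J"
  shows "F_span F (g ` J) = comb F J g"
proof
  show "F_span F (g ` J) \<subseteq> comb F J g"
  proof (rule span_least[OF comb_subsp[OF assms(1)]])
    show "g ` J \<subseteq> comb F J g"
    proof
      fix y assume "y \<in> g ` J"
      then obtain j where j: "j \<in> J" "y = g j" by auto
      have "(\<Sum>i\<in>J. (if i = j then 1 else 0) * g i) = (\<Sum>i\<in>J. if i = j then g i else 0)"
        by (rule sum.cong) auto
      also have "\<dots> = g j" using j(1) assms(2) by (simp add: sum.delta)
      finally have "(\<Sum>i\<in>J. (if i = j then 1 else 0) * g i) = g j" .
      moreover have "\<forall>i\<in>J. (if i = j then 1 else 0) \<in> F"
        using subfield_01[OF assms(1)] by auto
      ultimately show "y \<in> comb F J g" unfolding comb_def j(2)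
        by (intro CollectI exI[of _ "\<lambda>i. if i = j then 1 else 0"]) simp
    qed
  qed
next
  show "comb F J g \<subseteq> F_span F (g ` J)"
  proof
    fix y assume "y \<in> comb F J g"
    then obtain c where y: "y = (\<Sum>i\<in>J. c i * g i)" "\<forall>i\<in>J. c i \<in> F"
      unfolding comb_def by blast
    show "y \<in> F_span F (g ` J)" unfolding y(1)
    proof (rule subsp_sum[OF span_subsp[OF assms(1)]])
      fix i assume "i \<in> J"
      then have "g i \<in> F_span F (g ` J)" "c i \<in> F" using span_inc[OF assms(1), of "g ` J"] y(2) by auto
      then show "c i * g i \<in> F_span F (g ` J)"
        using span_subsp[OF assms(1), of "g ` J"] unfolding subsp_def by blast
    qed
  qed
qed

lemma card_comb:
  fixes g :: "'i \<Rightarrow> 'k::{field,finite}"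
  assumes "finite J"
  shows "card (comb F J g) \<le> card F ^ card J"
proof -
  have "comb F J g \<subseteq> (\<lambda>c. \<Sum>i\<in>J. c i * g i) ` (J \<rightarrow>\<^sub>E F)"
  proof
    fix y assume "y \<in> comb F J g"
    then obtain c where y: "y = (\<Sum>i\<in>J. c i * g i)" "\<forall>i\<in>J. c i \<in> F"
      unfolding comb_def by blast
    have "restrict c J \<in> J \<rightarrow>\<^sub>E F" using y(2) by auto
    moreover have "y = (\<Sum>i\<in>J. restrict c J i * g i)" using y(1) by simp
    ultimately show "y \<in> (\<lambda>c. \<Sum>i\<in>J. c i * g i) ` (J \<rightarrow>\<^sub>E F)" by blast
  qed
  then have "card (comb F J g) \<le> card ((\<lambda>c. \<Sum>i\<in>J. c i * g i) ` (J \<rightarrow>\<^sub>E F))"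
    by (rule card_mono[OF finite])
  also have "\<dots> \<le> card (J \<rightarrow>\<^sub>E F)" by (rule card_image_le) (use assms in \<open>simp add: finite_PiE\<close>)
  also have "\<dots> = card F ^ card J" by (rule card_funcsetE[OF assms])
  finally show ?thesis .
qed

lemma indep_card:
  fixes S :: "'k::{field,finite} set"
  assumes "is_subfield F" "F_indep F S"
  shows "card F ^ card S \<le> card (F_span F S)"
proof -
  let ?f = "\<lambda>c. \<Sum>s\<in>S. c s * s"
  have inj: "inj_on ?f (S \<rightarrow>\<^sub>E F)"
  proof (rule inj_onI)
    fix c d assume c: "c \<in> S \<rightarrow>\<^sub>E F" and d: "d \<in> S \<rightarrow>\<^sub>E F" and eq: "?f c = ?f d"
    have "(\<Sum>s\<in>S. (c s - d s) * s) = 0"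
      using eq by (simp add: left_diff_distrib sum_subtractf)
    moreover have "\<forall>s\<in>S. c s - d s \<in> F" using c d subfield_ops(4)[OF assms(1)] by auto
    ultimately have "\<forall>s\<in>S. c s - d s = 0"
      using indepD[OF assms(2), of "\<lambda>s. c s - d s"] by blast
    then show "c = d" using c d by (intro PiE_ext[OF c d]) auto
  qed
  have "?f ` (S \<rightarrow>\<^sub>E F) \<subseteq> F_span F S"
    unfolding span_eq_comb[OF assms(1)] comb_def by auto
  then have "card (?f ` (S \<rightarrow>\<^sub>E F)) \<le> card (F_span F S)" by (rule card_mono[OF finite])
  moreover have "card (?f ` (S \<rightarrow>\<^sub>E F)) = card F ^ card S"
    using card_image[OF inj] card_funcsetE[OF finite] by simp
  ultimately show ?thesis by simp
qed

lemma indep_insert: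
  fixes S :: "'k::{field,finite} set"
  assumes "is_subfield F" "F_indep F S" "x \<notin> F_span F S"
  shows "F_indep F (insert x S)"
proof -
  have xS: "x \<notin> S" using assms(3) span_inc[OF assms(1)] by blast
  show ?thesis unfolding F_indep_def
  proof (intro conjI allI impI)
    show "finite (insert x S)" by simp
  next
    fix c assume h: "(\<forall>s\<in>insert x S. c s \<in> F) \<and> (\<Sum>s\<in>insert x S. c s * s) = 0"
    then have sum0: "c x * x + (\<Sum>s\<in>S. c s * s) = 0" using xS by simp
    have cx: "c x = 0"
    proof (rule ccontr)
      assume ne: "c x \<noteq> 0"
      have "x = (\<Sum>s\<in>S. (- c s / c x) * s)"
      proof -
        have "c x * x = - (\<Sum>s\<in>S. c s * s)" using sum0 by (simp add: eq_neg_iff_add_eq_0)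
        then have "x = - (\<Sum>s\<in>S. c s * s) / c x" using ne by (simp add: field_simps)
        also have "\<dots> = (\<Sum>s\<in>S. (- c s / c x) * s)"
          by (simp add: sum_divide_distrib sum_negf[symmetric])
        finally show ?thesis .
      qed
      moreover have "\<forall>s\<in>S. - c s / c x \<in> F"
      proof
        fix s assume "s \<in> S"
        then have "c s \<in> F" "c x \<in> F" using h by auto
        then show "- c s / c x \<in> F" using sf_neg[OF assms(1)] subfield_ops(6)[OF assms(1)] by blast
      qed
      ultimately have "x \<in> comb F S (\<lambda>a. a)" unfolding comb_def
        by (intro CollectI exI[of _ "\<lambda>s. - c s / c x"]) simp
      then show False using assms(3) span_eq_comb[OF assms(1)] by blast
    qed
    have "\<forall>s\<in>S. c s = 0" using h sum0 cx indepD[OF assms(2), of c] by auto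
    then show "\<forall>s\<in>insert x S. c s = 0" using cx by simp
  qed
qed


lemma dim_basis:
  fixes X :: "'k::{field,finite} set"
  assumes "is_subfield F"
  shows "\<exists>S. S \<subseteq> F_span F X \<and> F_indep F S \<and> card S = F_dim F (F_span F X)
             \<and> F_span F X \<subseteq> F_span F S"
proof -
  let ?V = "F_span F X"
  let ?M = "{card S | S. S \<subseteq> ?V \<and> F_indep F S}"
  have fin: "finite ?M"
  proof (rule finite_subset)
    show "?M \<subseteq> {..card (UNIV :: 'k set)}"
    proof
      fix t assume "t \<in> ?M"
      then obtain S :: "'k set" where "t = card S" by blast
      then show "t \<in> {..card (UNIV :: 'k set)}" using card_mono[OF finite subset_UNIV, of S] by simp
    qed
  qed simp
  have "F_indep F {}" unfolding F_indep_def by simp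
  then have "card {} \<in> ?M" by (intro CollectI exI[of _ "{}"]) simp
  then have ne: "?M \<noteq> {}" by (metis empty_iff)
  have "F_dim F ?V \<in> ?M" unfolding F_dim_def by (rule Max_in[OF fin ne])
  then obtain S where S: "S \<subseteq> ?V" "F_indep F S" "card S = F_dim F ?V" by (smt (verit) mem_Collect_eq)
  have "?V \<subseteq> F_span F S"
  proof
    fix x assume xV: "x \<in> ?V"
    show "x \<in> F_span F S"
    proof (rule ccontr)
      assume nx: "x \<notin> F_span F S"
      then have "x \<notin> S" using span_inc[OF assms, of S] by blast
      then have "card (insert x S) = card S + 1" by simp
      moreover have "card (insert x S) \<in> ?M"
        using indep_insert[OF assms S(2) nx] xV S(1) by blast
      ultimately have "card S + 1 \<le> Max ?M" using Max_ge[OF fin] by simp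
      then have "card S + 1 \<le> F_dim F ?V" unfolding F_dim_def .
      then show False using S(3) by simp
    qed
  qed
  then show ?thesis using S by blast
qed

lemma dimA:
  fixes X :: "'k::{field,finite} set"
  assumes "is_subfield F"
  shows "card F ^ F_dim F (F_span F X) \<le> card (F_span F X)"
proof -
  obtain S where S: "S \<subseteq> F_span F X" "F_indep F S" "card S = F_dim F (F_span F X)"
    using dim_basis[OF assms] by blast
  have "F_span F S \<subseteq> F_span F X" by (rule span_least[OF span_subsp[OF assms] S(1)])
  then have "card (F_span F S) \<le> card (F_span F X)" by (rule card_mono[OF finite])
  moreover have "card F ^ card S \<le> card (F_span F S)" by (rule indep_card[OF assms S(2)])
  ultimately show ?thesis using S(3) by simp
qed

lemma dimB:
  fixes X :: "'k::{field,finite} set"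
  assumes "is_subfield F"
  shows "card (F_span F X) \<le> card F ^ F_dim F (F_span F X)"
proof -
  obtain S where S: "F_span F X \<subseteq> F_span F S" "card S = F_dim F (F_span F X)"
    using dim_basis[OF assms] by blast
  have "card (F_span F X) \<le> card (F_span F S)" by (rule card_mono[OF finite S(1)])
  also have "\<dots> = card (comb F S (\<lambda>a. a))" using span_eq_comb[OF assms] by simp
  also have "\<dots> \<le> card F ^ card S" by (rule card_comb[OF finite])
  finally show ?thesis using S(2) by simp
qed

lemma rk_span: "{x i | i. i < n} = x ` {..<n}" by auto

lemma rkA:
  fixes x :: "nat \<Rightarrow> 'k::{field,finite}"
  assumes "is_subfield F"
  shows "card F ^ rk F n x \<le> card (comb F {..<n} x)"
  using dimA[OF assms, of "x ` {..<n}"] unfolding rk_def rk_span span_image_eq[OF assms finite_lessThan] .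

lemma rkB:
  fixes x :: "nat \<Rightarrow> 'k::{field,finite}"
  assumes "is_subfield F"
  shows "card (comb F {..<n} x) \<le> card F ^ rk F n x"
  using dimB[OF assms, of "x ` {..<n}"] unfolding rk_def rk_span span_image_eq[OF assms finite_lessThan] .

lemma comb_least:
  fixes x :: "nat \<Rightarrow> 'k::{field,finite}"
  assumes "is_subfield F" "subsp F W" "\<And>i. i < n \<Longrightarrow> x i \<in> W"
  shows "comb F {..<n} x \<subseteq> W"
  using span_least[OF assms(2), of "x ` {..<n}"] assms(3) span_image_eq[OF assms(1) finite_lessThan]
  by auto

lemma rk_bound:
  fixes x :: "nat \<Rightarrow> 'k::{field,finite}"
  assumes "is_subfield F" "subsp F W" "\<And>i. i < n \<Longrightarrow> x i \<in> W"
  shows "card F ^ rk F n x \<le> card W"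
proof -
  have "comb F {..<n} x \<subseteq> W" by (rule comb_least[OF assms])
  then have "card (comb F {..<n} x) \<le> card W" by (rule card_mono[OF finite])
  then show ?thesis using rkA[OF assms(1), of n x] by linarith
qed

definition sumset :: "'k::field set \<Rightarrow> 'k set \<Rightarrow> 'k set" where
  "sumset A B = {a + b | a b. a \<in> A \<and> b \<in> B}"

lemma sumset_subsp:
  assumes "subsp F A" "subsp F B"
  shows "subsp F (sumset A B)"
  unfolding subsp_def sumset_def
proof (intro conjI ballI)
  show "0 \<in> {a + b |a b. a \<in> A \<and> b \<in> B}" using assms unfolding subsp_def by force
next
  fix x y assume "x \<in> {a + b |a b. a \<in> A \<and> b \<in> B}" "y \<in> {a + b |a b. a \<in> A \<and> b \<in> B}"
  then obtain a b a' b' where "x = a + b" "y = a' + b'" "a \<in> A" "b \<in> B" "a' \<in> A" "b' \<in> B" by blast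
  moreover have "x + y = (a + a') + (b + b')" using calculation by (simp add: algebra_simps)
  moreover have "a + a' \<in> A" "b + b' \<in> B" using calculation assms unfolding subsp_def by blast+
  ultimately show "x + y \<in> {a + b |a b. a \<in> A \<and> b \<in> B}" by blast
next
  fix c x assume "c \<in> F" "x \<in> {a + b |a b. a \<in> A \<and> b \<in> B}"
  then obtain a b where "x = a + b" "a \<in> A" "b \<in> B" by blast
  moreover have "c * x = c * a + c * b" using calculation by (simp add: algebra_simps)
  moreover have "c * a \<in> A" "c * b \<in> B" using calculation assms \<open>c \<in> F\<close> unfolding subsp_def by blast+
  ultimately show "c * x \<in> {a + b |a b. a \<in> A \<and> b \<in> B}" by blast
qed

lemma card_sumset:
  fixes A B :: "'k::{field,finite} set"
  shows "card (sumset A B) \<le> card A * card B"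
proof -
  have "sumset A B = (\<lambda>(a, b). a + b) ` (A \<times> B)" unfolding sumset_def by auto
  moreover have "card ((\<lambda>(a, b). a + b) ` (A \<times> B)) \<le> card (A \<times> B)"
    by (rule card_image_le) simp
  ultimately have "card (sumset A B) \<le> card (A \<times> B)" by simp
  then show ?thesis by (simp add: card_cartesian_product)
qed

lemma col_in_comb:
  fixes z :: "nat \<Rightarrow> 'k::{field,finite}"
  assumes "mat_over F r n M" "j < n"
  shows "(\<Sum>i<r. z i * M i j) \<in> comb F {..<r} z"
  unfolding comb_def using assms unfolding mat_over_def
  by (intro CollectI exI[of _ "\<lambda>i. M i j"]) (simp add: mult.commute)


lemma sum_split_nat:
  fixes f :: "nat \<Rightarrow> 'a::comm_monoid_add"
  assumes "v \<le> n"
  shows "(\<Sum>i<n. f i) = (\<Sum>i<v. f i) + (\<Sum>i<n - v. f (i + v))"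
proof -
  have "(\<Sum>i<n. f i) = sum f {0..<v} + sum f {v..<n}"
    using sum.atLeastLessThan_concat[of 0 v n f] assms by (simp add: atLeast0LessThan)
  also have "sum f {v..<n} = sum f {0 + v..<(n - v) + v}" using assms by simp
  also have "\<dots> = (\<Sum>i<n - v. f (i + v))"
    by (simp only: sum.shift_bounds_nat_ivl atLeast0LessThan)
  finally show ?thesis by (simp add: atLeast0LessThan)
qed

lemma stack_sum:
  fixes y :: "nat \<Rightarrow> 'k::comm_ring_1"
  assumes "v \<le> n"
  shows "(\<Sum>i<n. y i * stack v B Bbar i j)
       = (\<Sum>i<v. y i * B i j) + (\<Sum>i<n - v. y (i + v) * Bbar i j)"
  unfolding sum_split_nat[OF assms] stack_def by simp

lemma recover:
  fixes y :: "nat \<Rightarrow> 'k::comm_ring_1"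
  assumes "\<forall>i<n. \<forall>j<n. mat_mult n S N i j = (if i = j then 1 else 0)" "t < n"
  shows "(\<Sum>j<n. (\<Sum>i<n. y i * S i j) * N j t) = y t"
proof -
  have "(\<Sum>j<n. (\<Sum>i<n. y i * S i j) * N j t) = (\<Sum>j<n. \<Sum>i<n. y i * (S i j * N j t))"
    by (simp add: sum_distrib_right mult.assoc)
  also have "\<dots> = (\<Sum>i<n. \<Sum>j<n. y i * (S i j * N j t))" by (rule sum.swap)
  also have "\<dots> = (\<Sum>i<n. y i * mat_mult n S N i t)"
    unfolding mat_mult_def by (simp add: sum_distrib_left)
  also have "\<dots> = (\<Sum>i<n. if i = t then y i else 0)"
    using assms by (intro sum.cong) auto
  also have "\<dots> = y t" using assms(2) by (simp add: sum.delta)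
  finally show ?thesis .
qed

lemma decomp_exists:
  fixes x :: "nat \<Rightarrow> 'k::comm_ring_1"
  assumes "v \<le> n" "invertible_over F n (stack v B Bbar)" "x \<in> vecs n"
  shows "\<exists>a\<in>vecs v. \<exists>b\<in>vecs (n - v). \<forall>j. x j = vecmat v n a B j + vecmat (n - v) n b Bbar j"
proof -
  obtain N where N: "\<forall>i<n. \<forall>j<n. mat_mult n N (stack v B Bbar) i j = (if i = j then 1 else 0)"
    using assms(2) unfolding invertible_over_def by blast
  define y where "y i = (\<Sum>l<n. x l * N l i)" for i
  define a where "a i = (if i < v then y i else 0)" for i
  define b where "b i = (if i < n - v then y (i + v) else 0)" for i
  have a: "a \<in> vecs v" unfolding vecs_def a_def by simp
  have b: "b \<in> vecs (n - v)" unfolding vecs_def b_def by simp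
  have "x j = vecmat v n a B j + vecmat (n - v) n b Bbar j" for j
  proof (cases "j < n")
    case False
    then show ?thesis using assms(3) unfolding vecs_def vecmat_def by simp
  next
    case True
    have "vecmat v n a B j + vecmat (n - v) n b Bbar j
        = (\<Sum>i<v. y i * B i j) + (\<Sum>i<n - v. y (i + v) * Bbar i j)"
      unfolding vecmat_def a_def b_def using True by simp
    also have "\<dots> = (\<Sum>i<n. y i * stack v B Bbar i j)" by (rule stack_sum[OF assms(1), symmetric])
    also have "\<dots> = x j" unfolding y_def by (rule recover[OF N True])
    finally show ?thesis by simp
  qed
  then show ?thesis using a b by blast
qed

lemma decomp_unique:
  fixes a :: "nat \<Rightarrow> 'k::comm_ring_1"
  assumes "v \<le> n" "invertible_over F n (stack v B Bbar)"
    "a \<in> vecs v" "a' \<in> vecs v" "b \<in> vecs (n - v)" "b' \<in> vecs (n - v)"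
    "\<forall>j. vecmat v n a B j + vecmat (n - v) n b Bbar j = vecmat v n a' B j + vecmat (n - v) n b' Bbar j"
  shows "a = a'"
proof -
  obtain N where N: "\<forall>i<n. \<forall>j<n. mat_mult n (stack v B Bbar) N i j = (if i = j then 1 else 0)"
    using assms(2) unfolding invertible_over_def by blast
  define y where "y i = (if i < v then a i else b (i - v))" for i
  define y' where "y' i = (if i < v then a' i else b' (i - v))" for i
  have e: "(\<Sum>i<n. y i * stack v B Bbar i j) = (\<Sum>i<n. y' i * stack v B Bbar i j)" if "j < n" for j
  proof -
    have "(\<Sum>i<n. y i * stack v B Bbar i j) = vecmat v n a B j + vecmat (n - v) n b Bbar j"
      unfolding stack_sum[OF assms(1)] vecmat_def y_def using that by simp
    also have "\<dots> = vecmat v n a' B j + vecmat (n - v) n b' Bbar j" using assms(7) by blast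
    also have "\<dots> = (\<Sum>i<n. y' i * stack v B Bbar i j)"
      unfolding stack_sum[OF assms(1)] vecmat_def y'_def using that by simp
    finally show ?thesis .
  qed
  have "y t = y' t" if "t < n" for t
  proof -
    have "y t = (\<Sum>j<n. (\<Sum>i<n. y i * stack v B Bbar i j) * N j t)" by (rule recover[OF N that, symmetric])
    also have "\<dots> = (\<Sum>j<n. (\<Sum>i<n. y' i * stack v B Bbar i j) * N j t)"
      using e by (intro sum.cong) auto
    also have "\<dots> = y' t" by (rule recover[OF N that])
    finally show ?thesis .
  qed
  then show "a = a'"
  proof -
    have "a i = a' i" for i
    proof (cases "i < v")
      case True
      then have "y i = y' i" using \<open>\<And>t. t < n \<Longrightarrow> y t = y' t\<close> assms(1) by simp
      then show ?thesis using True unfolding y_def y'_def by simp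
    next
      case False
      then show ?thesis using assms(3,4) unfolding vecs_def by simp
    qed
    then show ?thesis by blast
  qed
qed

lemma r_V_prop:
  fixes x :: "nat \<Rightarrow> 'k::comm_ring_1"
  assumes "v \<le> n" "invertible_over F n (stack v B Bbar)" "x \<in> vecs n"
  shows "r_V v n B Bbar x \<in> vecs v \<and>
    (\<exists>b\<in>vecs (n - v). \<forall>j. x j = vecmat v n (r_V v n B Bbar x) B j + vecmat (n - v) n b Bbar j)"
proof -
  let ?P = "\<lambda>a. a \<in> vecs v \<and> (\<exists>b\<in>vecs (n - v). \<forall>j. x j = vecmat v n a B j + vecmat (n - v) n b Bbar j)"
  have ex: "\<exists>a. ?P a" using decomp_exists[OF assms] by blast
  have uq: "a = a'" if h: "?P a" "?P a'" for a a'
  proof -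
    obtain b b' where "b \<in> vecs (n - v)" "b' \<in> vecs (n - v)"
      "\<forall>j. x j = vecmat v n a B j + vecmat (n - v) n b Bbar j"
      "\<forall>j. x j = vecmat v n a' B j + vecmat (n - v) n b' Bbar j" using h by blast
    then show ?thesis using decomp_unique[OF assms(1,2), of a a' b b'] h by simp
  qed
  have "\<exists>!a. ?P a" using ex uq by blast
  then have "?P (THE a. ?P a)" by (rule theI')
  then show ?thesis unfolding r_V_def .
qed


lemma comb_zero:
  fixes J :: "'i set"
  assumes "is_subfield F"
  shows "comb F J (\<lambda>i. 0 :: 'k::field) = {0}"
proof -
  have "\<exists>c. \<forall>i\<in>J. c i \<in> F" using subfield_01[OF assms] by (intro exI[of _ "\<lambda>_. 0"]) simp
  then show ?thesis unfolding comb_def by auto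
qed

theorem lemma7:
  fixes F :: "'k::{field,finite} set"
    and q m n k v :: nat
    and C :: "(nat \<Rightarrow> 'k) set"
    and B Bbar :: "nat \<Rightarrow> nat \<Rightarrow> 'k"
  assumes "is_subfield F" and "card F = q" and "card (UNIV :: 'k set) = q ^ m"
    and "n \<le> m" and "1 \<le> k" and "k \<le> n"
    and "C \<subseteq> vecs n" and "card C = q ^ (m * k)"
    and "min_rank_dist F n C = n - k + 1"
    and "k \<le> v" and "v \<le> n"
    and "mat_over F v n B" and "mat_over F (n - v) n Bbar"
    and "invertible_over F n (stack v B Bbar)"
  shows "r_V v n B Bbar ` C \<subseteq> vecs v
       \<and> card (r_V v n B Bbar ` C) = q ^ (m * k)
       \<and> min_rank_dist F v (r_V v n B Bbar ` C) = v - k + 1"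
proof -
  note sf = assms(1)
  let ?R = "r_V v n B Bbar"
  have "{0, 1} \<subseteq> F" using subfield_01[OF sf] by simp
  then have "card {0, 1 :: 'k} \<le> card F" by (rule card_mono[OF finite])
  then have q2: "2 \<le> q" using assms(2) by simp
  then have q1: "1 < q" by simp
  have "card {0, 1 :: 'k} \<le> card (UNIV :: 'k set)" by (rule card_mono[OF finite]) simp
  then have "2 \<le> q ^ m" using assms(3) by simp
  then have m1: "1 \<le> m" by (cases m) auto
  have "0 < card C" using assms(8) q1 by simp
  then have finC: "finite C" by (rule card_ge_0_finite)
  have Rprop: "?R c \<in> vecs v \<and>
    (\<exists>b\<in>vecs (n - v). \<forall>j. c j = vecmat v n (?R c) B j + vecmat (n - v) n b Bbar j)"
    if "c \<in> C" for c
    using r_V_prop[OF assms(11,14)] that assms(7) by blast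
  have sub: "?R ` C \<subseteq> vecs v" using Rprop by blast
  have dC: "n - k + 1 \<le> rk F n (\<lambda>i. c i - d i)" if "c \<in> C" "d \<in> C" "c \<noteq> d" for c d
  proof -
    have fin: "finite {rk F n (\<lambda>i. c i - d i) | c d. c \<in> C \<and> d \<in> C \<and> c \<noteq> d}"
    proof (rule finite_subset)
      show "{rk F n (\<lambda>i. c i - d i) | c d. c \<in> C \<and> d \<in> C \<and> c \<noteq> d}
            \<subseteq> (\<lambda>(c, d). rk F n (\<lambda>i. c i - d i)) ` (C \<times> C)" by auto
    qed (use finC in simp)
    have "Min {rk F n (\<lambda>i. c i - d i) | c d. c \<in> C \<and> d \<in> C \<and> c \<noteq> d} \<le> rk F n (\<lambda>i. c i - d i)"
      by (rule Min_le[OF fin]) (use that in blast)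
    then show ?thesis using assms(9) unfolding min_rank_dist_def by simp
  qed
  have key: "q ^ (n - k + 1) \<le> card (comb F {..<v} (\<lambda>i. ?R c i - ?R d i)) * q ^ (n - v)"
    if cdC: "c \<in> C" "d \<in> C" "c \<noteq> d" for c d
  proof -
    obtain b where b: "\<forall>j. c j = vecmat v n (?R c) B j + vecmat (n - v) n b Bbar j"
      using Rprop[OF cdC(1)] by blast
    obtain b' where b': "\<forall>j. d j = vecmat v n (?R d) B j + vecmat (n - v) n b' Bbar j"
      using Rprop[OF cdC(2)] by blast
    let ?A = "comb F {..<v} (\<lambda>i. ?R c i - ?R d i)"
    let ?B = "comb F {..<n - v} (\<lambda>i. b i - b' i)"
    have W: "subsp F (sumset ?A ?B)" by (intro sumset_subsp comb_subsp sf)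
    have inW: "c j - d j \<in> sumset ?A ?B" if "j < n" for j
    proof -
      have "c j - d j = (\<Sum>i<v. (?R c i - ?R d i) * B i j) + (\<Sum>i<n - v. (b i - b' i) * Bbar i j)"
        using b b' that unfolding vecmat_def
        by (simp add: left_diff_distrib sum_subtractf algebra_simps)
      moreover have "(\<Sum>i<v. (?R c i - ?R d i) * B i j) \<in> ?A"
        by (rule col_in_comb[OF assms(12) that])
      moreover have "(\<Sum>i<n - v. (b i - b' i) * Bbar i j) \<in> ?B"
        by (rule col_in_comb[OF assms(13) that])
      ultimately show ?thesis unfolding sumset_def by blast
    qed
    have "q ^ (n - k + 1) \<le> q ^ rk F n (\<lambda>i. c i - d i)"
      by (rule power_increasing[OF dC[OF cdC]]) (use q1 in simp)
    also have "\<dots> \<le> card (sumset ?A ?B)"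
      using rk_bound[OF sf W, of n "\<lambda>i. c i - d i"] inW assms(2) by simp
    also have "\<dots> \<le> card ?A * card ?B" by (rule card_sumset)
    also have "\<dots> \<le> card ?A * q ^ (n - v)"
      using card_comb[of "{..<n - v}" F "\<lambda>i. b i - b' i"] assms(2) by simp
    finally show ?thesis .
  qed
  have inj: "inj_on ?R C"
  proof (rule inj_onI, rule ccontr)
    fix c d assume h: "c \<in> C" "d \<in> C" "?R c = ?R d" "c \<noteq> d"
    have "q ^ (n - k + 1) \<le> card (comb F {..<v} (\<lambda>i. ?R c i - ?R d i)) * q ^ (n - v)"
      by (rule key[OF h(1,2,4)])
    also have "comb F {..<v} (\<lambda>i. ?R c i - ?R d i) = {0}" using h(3) comb_zero[OF sf] by simp
    finally have "q ^ (n - k + 1) \<le> q ^ (n - v)" by simp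
    then have "n - k + 1 \<le> n - v" by (rule power_le_imp_le_exp[OF q1])
    then show False using assms(6,10,11) by simp
  qed
  have cardCV: "card (?R ` C) = q ^ (m * k)" using card_image[OF inj] assms(8) by simp
  have dV: "v - k + 1 \<le> rk F v (\<lambda>i. a i - a' i)" if "a \<in> ?R ` C" "a' \<in> ?R ` C" "a \<noteq> a'" for a a'
  proof -
    note aa0 = that
    obtain c d where cd: "c \<in> C" "d \<in> C" "a = ?R c" "a' = ?R d" using aa0 by blast
    then have "c \<noteq> d" using aa0(3) by blast
    have "q ^ (n - k + 1) \<le> card (comb F {..<v} (\<lambda>i. a i - a' i)) * q ^ (n - v)"
      using key[OF cd(1,2) \<open>c \<noteq> d\<close>] cd by simp
    also have "\<dots> \<le> q ^ rk F v (\<lambda>i. a i - a' i) * q ^ (n - v)"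
      using rkB[OF sf, of v "\<lambda>i. a i - a' i"] assms(2) by simp
    also have "\<dots> = q ^ (rk F v (\<lambda>i. a i - a' i) + (n - v))" by (simp add: power_add)
    finally have "n - k + 1 \<le> rk F v (\<lambda>i. a i - a' i) + (n - v)" by (rule power_le_imp_le_exp[OF q1])
    then show ?thesis using assms(6,10,11) by simp
  qed
  \<comment> \<open>a pair achieving the Singleton bound\<close>
  obtain a a' where aa: "a \<in> ?R ` C" "a' \<in> ?R ` C" "a \<noteq> a'" "\<forall>i<k - 1. a i = a' i"
  proof -
    let ?p = "\<lambda>a. restrict a {..<k - 1}"
    have sub2: "?p ` (?R ` C) \<subseteq> {..<k - 1} \<rightarrow>\<^sub>E (UNIV :: 'k set)"
      by (intro image_subsetI) (simp add: restrict_PiE_iff)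
    have fP: "finite ({..<k - 1} \<rightarrow>\<^sub>E (UNIV :: 'k set))" by (rule finite_PiE) simp_all
    have "card (?p ` (?R ` C)) \<le> card ({..<k - 1} \<rightarrow>\<^sub>E (UNIV :: 'k set))"
      by (rule card_mono[OF fP sub2])
    also have "\<dots> = (q ^ m) ^ (k - 1)" using card_funcsetE[of "{..<k - 1}" "UNIV :: 'k set"] assms(3) by simp
    also have "\<dots> = q ^ (m * (k - 1))" by (simp add: power_mult)
    also have "\<dots> < q ^ (m * k)" using q1 m1 assms(5) by simp
    finally have "card (?p ` (?R ` C)) < card (?R ` C)" using cardCV by simp
    then have "\<exists>x\<in>?R ` C. \<exists>y\<in>?R ` C. x \<noteq> y \<and> ?p x = ?p y"
    proof (rule contrapos_pp)
      assume "\<not> (\<exists>x\<in>?R ` C. \<exists>y\<in>?R ` C. x \<noteq> y \<and> ?p x = ?p y)"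
      then have "inj_on ?p (?R ` C)" by (intro inj_onI) blast
      then have "card (?p ` (?R ` C)) = card (?R ` C)" by (rule card_image)
      then show "\<not> card (?p ` (?R ` C)) < card (?R ` C)" by simp
    qed
    then obtain x y where "x \<in> ?R ` C" "y \<in> ?R ` C" "x \<noteq> y" "?p x = ?p y"
      by blast
    moreover have "\<forall>i<k - 1. x i = y i"
    proof (intro allI impI)
      fix i assume "i < k - 1"
      then show "x i = y i" using fun_cong[OF \<open>?p x = ?p y\<close>, of i] by simp
    qed
    ultimately show ?thesis using that by blast
  qed
  have up: "rk F v (\<lambda>i. a i - a' i) \<le> v - k + 1"
  proof -
    let ?W = "comb F {k - 1..<v} (\<lambda>i. a i - a' i)"
    have W: "subsp F ?W" by (rule comb_subsp[OF sf])
    have inW: "a i - a' i \<in> ?W" if "i < v" for i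
    proof (cases "i < k - 1")
      case True
      then show ?thesis using aa(4) W unfolding subsp_def by simp
    next
      case False
      then have "i \<in> {k - 1..<v}" using that by simp
      then have "a i - a' i \<in> (\<lambda>i. a i - a' i) ` {k - 1..<v}" by (rule imageI)
      then have "a i - a' i \<in> F_span F ((\<lambda>i. a i - a' i) ` {k - 1..<v})"
        using span_inc[OF sf, of "(\<lambda>i. a i - a' i) ` {k - 1..<v}"] by (rule subsetD[rotated])
      then show ?thesis using span_image_eq[OF sf finite_atLeastLessThan] by simp
    qed
    have "q ^ rk F v (\<lambda>i. a i - a' i) \<le> card ?W"
      using rk_bound[OF sf W, of v "\<lambda>i. a i - a' i"] inW assms(2) by simp
    also have "\<dots> \<le> q ^ card {k - 1..<v}"
      using card_comb[of "{k - 1..<v}" F "\<lambda>i. a i - a' i"] assms(2) by simp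
    also have "card {k - 1..<v} = v - k + 1" using assms(5,10) by simp
    then have "q ^ card {k - 1..<v} = q ^ (v - k + 1)" by (rule arg_cong)
    finally show ?thesis by (rule power_le_imp_le_exp[OF q1])
  qed
  have md: "min_rank_dist F v (?R ` C) = v - k + 1"
  proof -
    let ?D = "{rk F v (\<lambda>i. c i - d i) | c d. c \<in> ?R ` C \<and> d \<in> ?R ` C \<and> c \<noteq> d}"
    have fin: "finite ?D"
    proof (rule finite_subset)
      show "?D \<subseteq> (\<lambda>(c, d). rk F v (\<lambda>i. c i - d i)) ` (?R ` C \<times> ?R ` C)" by auto
    qed (use finC in simp)
    have "Min ?D = v - k + 1"
    proof (rule Min_eqI[OF fin])
      fix y assume "y \<in> ?D"
      then show "v - k + 1 \<le> y" using dV by blast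
    next
      have "rk F v (\<lambda>i. a i - a' i) = v - k + 1" using up dV[OF aa(1-3)] by simp
      then show "v - k + 1 \<in> ?D" using aa(1-3)
        by (intro CollectI exI[of _ a] exI[of _ a']) simp
    qed
    then show ?thesis unfolding min_rank_dist_def .
  qed
  show ?thesis using sub cardCV md by blast
qed

end
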